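(* Let $\mathcal{X}$ and $\mathcal{Y}$ be finite sets, $g:\mathcal{X}\times\mathcal{Y}\to\mathbb{R}_{>0}$ a strictly positive function, and $h:\mathcal{Y}\to\mathbb{R}_{\ge0}$ a non-negative function. Then, writing $X\sim p$ and $Y\sim q$ in all expectations, \[ \max_{q\in\Delta(\mathcal{Y})}\min_{x\in\mathcal{X}}\mathbb{E}\frac{g(x,Y)}{h(Y)} =\min_{p\in\Delta(\mathcal{X})}\max_{y\in\mathcal{Y}}\frac{\mathbb{E}\,g(X,y)}{h(y)} =\max_{q\in\Delta(\mathcal{Y})}\min_{p\in\Delta(\mathcal{X})}\frac{\mathbb{E}\,g(X,Y)}{\mathbb{E}\,h(Y)} =\min_{p\in\Delta(\mathcal{X})}\max_{q\in\Delta(\mathcal{Y})}\frac{\mathbb{E}\,g(X,Y)}{\mathbb{E}\,h(Y)}. \]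
   Context: For a finite set $U$, $\Delta(U)$ denotes the set of all probability distributions on $U$; $X$ and $Y$ are independent. *)

theory Defs
  imports "HOL-Analysis.Analysis"
begin

definition prob_simplex :: "('a::finite \<Rightarrow> real) set" where
  "prob_simplex = {p. (\<forall>u. 0 \<le> p u) \<and> (\<Sum>u\<in>UNIV. p u) = 1}"

text \<open>Values in the extended reals: division by h y = 0 gives +infinity
  (numerators are positive), and 0 * infinity = 0.\<close>

definition E1 :: "('x::finite \<Rightarrow> 'y::finite \<Rightarrow> real) \<Rightarrow> ('y \<Rightarrow> real) \<Rightarrow> ('y \<Rightarrow> real) \<Rightarrow> 'x \<Rightarrow> ereal" where
  "E1 g h q x = (\<Sum>y\<in>UNIV. ereal (q y) * (ereal (g x y) / ereal (h y)))"

definition E2 :: "('x::finite \<Rightarrow> 'y::finite \<Rightarrow> real) \<Rightarrow> ('y \<Rightarrow> real) \<Rightarrow> ('x \<Rightarrow> real) \<Rightarrow> 'y \<Rightarrow> ereal" where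
  "E2 g h p y = ereal (\<Sum>x\<in>UNIV. p x * g x y) / ereal (h y)"

definition R :: "('x::finite \<Rightarrow> 'y::finite \<Rightarrow> real) \<Rightarrow> ('y \<Rightarrow> real) \<Rightarrow> ('x \<Rightarrow> real) \<Rightarrow> ('y \<Rightarrow> real) \<Rightarrow> ereal" where
  "R g h p q = ereal (\<Sum>x\<in>UNIV. \<Sum>y\<in>UNIV. p x * q y * g x y) / ereal (\<Sum>y\<in>UNIV. q y * h y)"

definition is_max :: "ereal \<Rightarrow> ereal set \<Rightarrow> bool" where
  "is_max v S \<longleftrightarrow> v \<in> S \<and> (\<forall>s\<in>S. s \<le> v)"

definition is_min :: "ereal \<Rightarrow> ereal set \<Rightarrow> bool" where
  "is_min v S \<longleftrightarrow> v \<in> S \<and> (\<forall>s\<in>S. v \<le> s)"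

end

theory Submission
  imports Defs
begin

lemma delta_in: "(\<lambda>y. if y = y0 then 1 else 0) \<in> (prob_simplex :: ('a::finite \<Rightarrow> real) set)"
  unfolding prob_simplex_def by simp

lemma simplex_min:
  fixes c :: "'a::finite \<Rightarrow> real"
  assumes "p \<in> prob_simplex"
  shows "Min (range c) \<le> (\<Sum>x\<in>UNIV. p x * c x)"
proof -
  have "Min (range c) = (\<Sum>x\<in>UNIV. p x * Min (range c))"
    using assms unfolding prob_simplex_def by (simp add: sum_distrib_right[symmetric])
  also have "\<dots> \<le> (\<Sum>x\<in>UNIV. p x * c x)"
    using assms unfolding prob_simplex_def by (intro sum_mono mult_left_mono) auto
  finally show ?thesis .
qed

lemma simplex_max:
  fixes c :: "'a::finite \<Rightarrow> real"
  assumes "p \<in> prob_simplex"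
  shows "(\<Sum>x\<in>UNIV. p x * c x) \<le> Max (range c)"
proof -
  have "(\<Sum>x\<in>UNIV. p x * c x) \<le> (\<Sum>x\<in>UNIV. p x * Max (range c))"
    using assms unfolding prob_simplex_def by (intro sum_mono mult_left_mono) auto
  also have "\<dots> = Max (range c)"
    using assms unfolding prob_simplex_def by (simp add: sum_distrib_right[symmetric])
  finally show ?thesis .
qed

lemma cvx_ge: "(v::real) \<le> a \<Longrightarrow> v \<le> b \<Longrightarrow> 0 \<le> u \<Longrightarrow> 0 \<le> w \<Longrightarrow> u + w = 1 \<Longrightarrow> v \<le> u * a + w * b"
proof -
  assume h: "v \<le> a" "v \<le> b" "0 \<le> u" "0 \<le> w" "u + w = 1"
  have "v = u * v + w * v" using h(5) by (metis distrib_right mult_1)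
  also have "\<dots> \<le> u * a + w * b" using h by (intro add_mono mult_left_mono) auto
  finally show ?thesis .
qed

lemma alt:
  fixes A :: "'x::finite \<Rightarrow> 'y::finite \<Rightarrow> real"
  assumes H: "\<forall>p\<in>prob_simplex. \<exists>y. v \<le> (\<Sum>x\<in>UNIV. p x * A x y)"
  shows "\<exists>q\<in>prob_simplex. \<forall>x. v \<le> (\<Sum>y\<in>UNIV. q y * A x y)"
proof (rule ccontr)
  assume N: "\<not> ?thesis"
  define col :: "'y \<Rightarrow> real^'x" where "col y = (\<chi> x. A x y)" for y
  define K where "K = convex hull (range col)"
  define C :: "(real^'x) set" where "C = {z. \<forall>x. v \<le> z$x}"
  define S :: "(real^'x) set" where "S = {(\<chi> x. \<Sum>y\<in>UNIV. q y * A x y) | q. q \<in> prob_simplex}"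
  have cS: "convex S"
    unfolding convex_def S_def
  proof (intro ballI allI impI)
    fix a b :: "real^'x" and u w :: real
    assume "a \<in> {(\<chi> x. \<Sum>y\<in>UNIV. q y * A x y) | q. q \<in> prob_simplex}"
      "b \<in> {(\<chi> x. \<Sum>y\<in>UNIV. q y * A x y) | q. q \<in> prob_simplex}" "0 \<le> u" "0 \<le> w" "u + w = 1"
    then obtain qa qb where qa: "qa \<in> prob_simplex" "a = (\<chi> x. \<Sum>y\<in>UNIV. qa y * A x y)"
      and qb: "qb \<in> prob_simplex" "b = (\<chi> x. \<Sum>y\<in>UNIV. qb y * A x y)" by blast
    define q where "q y = u * qa y + w * qb y" for y
    have "q \<in> prob_simplex" using qa qb \<open>0 \<le> u\<close> \<open>0 \<le> w\<close> \<open>u + w = 1\<close>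
      unfolding prob_simplex_def q_def by (simp add: sum.distrib sum_distrib_left[symmetric])
    moreover have "u *\<^sub>R a + w *\<^sub>R b = (\<chi> x. \<Sum>y\<in>UNIV. q y * A x y)"
      unfolding qa qb q_def by (simp add: vec_eq_iff sum_distrib_left sum.distrib algebra_simps)
    ultimately show "u *\<^sub>R a + w *\<^sub>R b \<in> {(\<chi> x. \<Sum>y\<in>UNIV. q y * A x y) | q. q \<in> prob_simplex}"
      by blast
  qed
  have colS: "range col \<subseteq> S"
  proof
    fix z assume "z \<in> range col"
    then obtain y0 where "z = col y0" by auto
    have "z = (\<chi> x. \<Sum>y\<in>UNIV. (\<lambda>y. if y = y0 then 1 else 0) y * A x y)"
    proof -
      have "\<And>x. (\<Sum>y\<in>UNIV. (\<lambda>y. if y = y0 then 1 else 0) y * A x y) = A x y0"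
        by (simp add: if_distrib[of "\<lambda>c. c * _"] cong: if_cong)
      then show ?thesis using \<open>z = col y0\<close> unfolding col_def by simp
    qed
    then show "z \<in> S" unfolding S_def using delta_in[of y0]
      by (intro CollectI exI[of _ "\<lambda>y. if y = y0 then (1::real) else 0"]) simp
  qed
  have KS: "K \<subseteq> S" unfolding K_def using cS colS by (simp add: hull_minimal)
  have disj: "K \<inter> C = {}"
  proof (rule ccontr)
    assume "K \<inter> C \<noteq> {}"
    then obtain z where "z \<in> S" "z \<in> C" using KS by blast
    then obtain q where "q \<in> prob_simplex" "\<forall>x. v \<le> (\<Sum>y\<in>UNIV. q y * A x y)"
      unfolding S_def C_def by auto
    then show False using N by blast
  qed
  have "convex K" "compact K" "K \<noteq> {}" unfolding K_def
    by (auto simp: convex_convex_hull finite_imp_compact_convex_hull)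
  moreover have "convex C" unfolding C_def convex_def by (auto intro: cvx_ge)
  moreover have "closed C" unfolding C_def
    by (intro closed_Collect_all closed_Collect_le continuous_intros)
  ultimately obtain a b where ab: "\<forall>z\<in>K. inner a z < b" "\<forall>z\<in>C. inner a z > b"
    using separating_hyperplane_compact_closed[of K C] disj by blast
  have inner_eq: "inner a z = (\<Sum>x\<in>UNIV. a$x * z$x)" for z
    by (simp add: inner_vec_def)
  have apos: "a$x0 \<ge> 0" for x0
  proof (rule ccontr)
    assume neg: "\<not> a$x0 \<ge> 0"
    define l where "l = max 0 (((\<Sum>x\<in>UNIV. a$x * v) - b) / (- a$x0))"
    define t :: "real^'x" where "t = (\<chi> x. if x = x0 then v + l else v)"
    have "t \<in> C" unfolding t_def C_def l_def by auto
    have tt: "\<And>x. a$x * t$x = a$x * v + (if x = x0 then a$x0 * l else 0)"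
      unfolding t_def by (simp add: algebra_simps)
    have "inner a t = (\<Sum>x\<in>UNIV. a$x * v) + a$x0 * l"
      unfolding inner_eq tt by (simp add: sum.distrib)
    also have "\<dots> \<le> b"
    proof -
      have "((\<Sum>x\<in>UNIV. a$x * v) - b) / (- a$x0) \<le> l" unfolding l_def by simp
      moreover have d: "- a$x0 > 0" using neg by simp
      ultimately have "((\<Sum>x\<in>UNIV. a$x * v) - b) \<le> l * (- a$x0)"
        using pos_divide_le_eq[OF d] by blast
      then show ?thesis by (simp add: algebra_simps)
    qed
    finally show False using ab(2) \<open>t \<in> C\<close> by force
  qed
  have "a \<noteq> 0"
  proof
    assume "a = 0"
    have "(\<chi> x. v) \<in> C" unfolding C_def by simp
    then have "b < 0" using ab(2) \<open>a = 0\<close> by force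
    moreover have "col undefined \<in> K" unfolding K_def by (simp add: hull_inc)
    then have "0 < b" using ab(1) \<open>a = 0\<close> by force
    ultimately show False by simp
  qed
  then obtain x1 where "a$x1 \<noteq> 0" by (auto simp: vec_eq_iff)
  then have "a$x1 > 0" using apos[of x1] by simp
  define s where "s = (\<Sum>x\<in>UNIV. a$x)"
  have spos: "s > 0" unfolding s_def using \<open>a$x1 > 0\<close> apos
    by (intro sum_pos2[of UNIV x1]) auto
  define p where "p x = a$x / s" for x
  have p_in: "p \<in> prob_simplex" unfolding prob_simplex_def p_def using apos spos
    by (simp add: sum_divide_distrib[symmetric] s_def)
  obtain y where y: "v \<le> (\<Sum>x\<in>UNIV. p x * A x y)" using H p_in by blast
  have "col y \<in> K" unfolding K_def by (simp add: hull_inc)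
  then have "inner a (col y) < b" using ab(1) by blast
  moreover have "(\<chi> x. v) \<in> C" unfolding C_def by simp
  then have "b < inner a (\<chi> x. v)" using ab(2) by blast
  ultimately have "(\<Sum>x\<in>UNIV. a$x * A x y) < (\<Sum>x\<in>UNIV. a$x * v)"
    unfolding inner_eq col_def by simp
  then have "(\<Sum>x\<in>UNIV. a$x * A x y) / s < v" using spos
    by (simp add: pos_divide_less_eq sum_distrib_left s_def mult.commute)
  moreover have "(\<Sum>x\<in>UNIV. p x * A x y) = (\<Sum>x\<in>UNIV. a$x * A x y) / s"
    unfolding p_def by (simp add: sum_divide_distrib)
  ultimately show False using y by simp
qed

lemma swap_pq:
  fixes A :: "'x::finite \<Rightarrow> 'y::finite \<Rightarrow> real"
  shows "(\<Sum>x\<in>UNIV. p x * (\<Sum>y\<in>UNIV. q y * A x y)) = (\<Sum>y\<in>UNIV. q y * (\<Sum>x\<in>UNIV. p x * A x y))"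
  unfolding sum_distrib_left by (subst sum.swap) (simp add: mult.left_commute)

lemma weak_dual:
  fixes A :: "'x::finite \<Rightarrow> 'y::finite \<Rightarrow> real"
  assumes "p \<in> prob_simplex" "q \<in> prob_simplex"
  shows "Min (range (\<lambda>x. \<Sum>y\<in>UNIV. q y * A x y)) \<le> Max (range (\<lambda>y. \<Sum>x\<in>UNIV. p x * A x y))"
  using simplex_min[OF assms(1), of "\<lambda>x. \<Sum>y\<in>UNIV. q y * A x y"]
    simplex_max[OF assms(2), of "\<lambda>y. \<Sum>x\<in>UNIV. p x * A x y"] swap_pq[of p q A]
  by linarith

lemma minimax_core:
  fixes A :: "'x::finite \<Rightarrow> 'y::finite \<Rightarrow> real"
  shows "\<exists>p\<in>prob_simplex. \<exists>q\<in>prob_simplex. \<forall>x y. (\<Sum>x'\<in>UNIV. p x' * A x' y) \<le> (\<Sum>y'\<in>UNIV. q y' * A x y')"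
proof -
  define M where "M p = Max (range (\<lambda>y. \<Sum>x\<in>UNIV. p x * A x y))" for p :: "'x \<Rightarrow> real"
  define N where "N q = Min (range (\<lambda>x. \<Sum>y\<in>UNIV. q y * A x y))" for q :: "'y \<Rightarrow> real"
  define V where "V = Inf (M ` prob_simplex)"
  define W where "W = Sup (N ` prob_simplex)"
  have ne1: "(prob_simplex :: ('x \<Rightarrow> real) set) \<noteq> {}" using delta_in by blast
  have ne2: "(prob_simplex :: ('y \<Rightarrow> real) set) \<noteq> {}" using delta_in by blast
  obtain q0 :: "'y \<Rightarrow> real" where q0: "q0 \<in> prob_simplex" using ne2 by blast
  obtain p0 :: "'x \<Rightarrow> real" where p0: "p0 \<in> prob_simplex" using ne1 by blast
  have wd: "N q \<le> M p" if "p \<in> prob_simplex" "q \<in> prob_simplex" for p q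
    unfolding M_def N_def using weak_dual[OF that] .
  have bb: "bdd_below (M ` prob_simplex)"
    using wd[OF _ q0] by (intro bdd_belowI[of _ "N q0"]) auto
  have ba: "bdd_above (N ` prob_simplex)"
    using wd[OF p0] by (intro bdd_aboveI[of _ "M p0"]) auto
  have "\<forall>p\<in>prob_simplex. \<exists>y. V \<le> (\<Sum>x\<in>UNIV. p x * A x y)"
  proof
    fix p :: "'x \<Rightarrow> real" assume p: "p \<in> prob_simplex"
    have "V \<le> M p" unfolding V_def using bb p by (intro cInf_lower) auto
    moreover have "M p \<in> range (\<lambda>y. \<Sum>x\<in>UNIV. p x * A x y)" unfolding M_def
      by (intro Max_in) auto
    ultimately show "\<exists>y. V \<le> (\<Sum>x\<in>UNIV. p x * A x y)" by auto
  qed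
  from alt[OF this] obtain qs where qs: "qs \<in> prob_simplex" "\<forall>x. V \<le> (\<Sum>y\<in>UNIV. qs y * A x y)"
    by blast
  have "\<forall>q\<in>prob_simplex. \<exists>x. - W \<le> (\<Sum>y\<in>UNIV. q y * (\<lambda>y x. - A x y) y x)"
  proof
    fix q :: "'y \<Rightarrow> real" assume q: "q \<in> prob_simplex"
    have "N q \<le> W" unfolding W_def using ba q by (intro cSup_upper) auto
    moreover have "N q \<in> range (\<lambda>x. \<Sum>y\<in>UNIV. q y * A x y)" unfolding N_def
      by (intro Min_in) auto
    ultimately show "\<exists>x. - W \<le> (\<Sum>y\<in>UNIV. q y * (\<lambda>y x. - A x y) y x)"
      by (auto simp: sum_negf)
  qed
  from alt[OF this] obtain ps where ps: "ps \<in> prob_simplex"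
    "\<forall>y. - W \<le> (\<Sum>x\<in>UNIV. ps x * (\<lambda>y x. - A x y) y x)" by blast
  have WV: "W \<le> V" unfolding W_def V_def
    using ne1 ne2 wd by (intro cSup_least cInf_greatest) auto
  show ?thesis
  proof (intro bexI allI)
    fix x y
    have "(\<Sum>x'\<in>UNIV. ps x' * A x' y) \<le> W" using ps(2) by (simp add: sum_negf)
    also have "\<dots> \<le> V" by (rule WV)
    also have "\<dots> \<le> (\<Sum>y'\<in>UNIV. qs y' * A x y')" using qs(2) by blast
    finally show "(\<Sum>x'\<in>UNIV. ps x' * A x' y) \<le> (\<Sum>y'\<in>UNIV. qs y' * A x y')" .
  qed (use ps qs in auto)
qed

lemma pos_comb:
  fixes c :: "'a::finite \<Rightarrow> real"
  assumes "p \<in> prob_simplex" "\<And>x. c x > 0"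
  shows "0 < (\<Sum>x\<in>UNIV. p x * c x)"
proof -
  have "0 < Min (range c)" using assms(2) by (simp add: Min_gr_iff)
  then show ?thesis using simplex_min[OF assms(1), of c] by linarith
qed

lemma R_num:
  fixes g :: "'x::finite \<Rightarrow> 'y::finite \<Rightarrow> real"
  shows "(\<Sum>x\<in>UNIV. \<Sum>y\<in>UNIV. p x * q y * g x y) = (\<Sum>x\<in>UNIV. p x * (\<Sum>y\<in>UNIV. q y * g x y))"
  by (simp add: sum_distrib_left mult.assoc)

lemma R_min:
  fixes g :: "'x::finite \<Rightarrow> 'y::finite \<Rightarrow> real" and h :: "'y \<Rightarrow> real"
  assumes q: "q \<in> prob_simplex" and D: "(\<Sum>y\<in>UNIV. q y * h y) > 0"
  shows "is_min (ereal (Min (range (\<lambda>x. (\<Sum>y\<in>UNIV. q y * g x y) / (\<Sum>y\<in>UNIV. q y * h y)))))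
           ((\<lambda>p. R g h p q) ` prob_simplex)"
proof -
  define Dq where "Dq = (\<Sum>y\<in>UNIV. q y * h y)"
  define c where "c x = (\<Sum>y\<in>UNIV. q y * g x y) / Dq" for x
  have Req: "R g h p q = ereal (\<Sum>x\<in>UNIV. p x * c x)" for p
  proof -
    have "R g h p q = ereal ((\<Sum>x\<in>UNIV. p x * (\<Sum>y\<in>UNIV. q y * g x y)) / Dq)"
      unfolding R_def R_num Dq_def using D by simp
    also have "\<dots> = ereal (\<Sum>x\<in>UNIV. p x * c x)"
      by (simp add: c_def sum_divide_distrib[symmetric])
    finally show ?thesis .
  qed
  have "Min (range c) \<in> range c" by (rule Min_in) auto
  then obtain x0 where x0: "Min (range c) = c x0" by (metis rangeE)
  show ?thesis unfolding is_min_def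
  proof
    have "R g h (\<lambda>x. if x = x0 then 1 else 0) q = ereal (Min (range c))"
      unfolding Req x0 by (simp add: if_distrib[of "\<lambda>a. a * _"] cong: if_cong)
    then show "ereal (Min (range (\<lambda>x. (\<Sum>y\<in>UNIV. q y * g x y) / (\<Sum>y\<in>UNIV. q y * h y))))
      \<in> (\<lambda>p. R g h p q) ` prob_simplex"
      using delta_in[of x0] unfolding c_def Dq_def by (metis image_eqI)
    show "\<forall>s\<in>(\<lambda>p. R g h p q) ` prob_simplex.
       ereal (Min (range (\<lambda>x. (\<Sum>y\<in>UNIV. q y * g x y) / (\<Sum>y\<in>UNIV. q y * h y)))) \<le> s"
      using simplex_min[of _ c] unfolding Req c_def Dq_def by auto
  qed
qed

lemma R_max_B:
  fixes g :: "'x::finite \<Rightarrow> 'y::finite \<Rightarrow> real" and h :: "'y \<Rightarrow> real"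
  assumes hpos: "\<And>y. h y > 0" and p: "p \<in> prob_simplex"
  shows "is_max (ereal (Max (range (\<lambda>y. (\<Sum>x\<in>UNIV. p x * g x y) / h y))))
           ((\<lambda>q. R g h p q) ` prob_simplex)"
proof -
  define a where "a y = (\<Sum>x\<in>UNIV. p x * g x y)" for y
  define M where "M = Max (range (\<lambda>y. a y / h y))"
  have Dpos: "(\<Sum>y\<in>UNIV. q y * h y) > 0" if "q \<in> prob_simplex" for q
    using pos_comb[OF that, of h] hpos by simp
  have Req: "R g h p q = ereal ((\<Sum>y\<in>UNIV. q y * a y) / (\<Sum>y\<in>UNIV. q y * h y))"
    if "q \<in> prob_simplex" for q
    unfolding R_def R_num a_def swap_pq[of p q g] using Dpos[OF that] by simp
  have "M \<in> range (\<lambda>y. a y / h y)" unfolding M_def by (rule Max_in) auto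
  then obtain y0 where y0: "M = a y0 / h y0" by auto
  show ?thesis unfolding is_max_def a_def[symmetric] M_def[symmetric]
  proof
    have "R g h p (\<lambda>y. if y = y0 then 1 else 0) = ereal M"
      using Req[OF delta_in[of y0]] unfolding y0 by (simp add: if_distrib[of "\<lambda>a. a * _"] cong: if_cong)
    then show "ereal M \<in> (\<lambda>q. R g h p q) ` prob_simplex" using delta_in[of y0] by (metis image_eqI)
    show "\<forall>s\<in>(\<lambda>q. R g h p q) ` prob_simplex. s \<le> ereal M"
    proof
      fix s assume "s \<in> (\<lambda>q. R g h p q) ` prob_simplex"
      then obtain q where q: "q \<in> prob_simplex" "s = R g h p q" by auto
      have "(\<Sum>y\<in>UNIV. q y * a y) = (\<Sum>y\<in>UNIV. (q y * h y) * (a y / h y))"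
        using hpos by (intro sum.cong) (auto simp: field_simps less_imp_neq[symmetric])
      also have "\<dots> \<le> (\<Sum>y\<in>UNIV. (q y * h y) * M)"
        using q hpos unfolding prob_simplex_def M_def
        by (intro sum_mono mult_left_mono) (auto intro!: mult_nonneg_nonneg simp: less_imp_le)
      also have "\<dots> = M * (\<Sum>y\<in>UNIV. q y * h y)" by (simp add: sum_distrib_left mult.commute)
      finally have "(\<Sum>y\<in>UNIV. q y * a y) / (\<Sum>y\<in>UNIV. q y * h y) \<le> M"
        using Dpos[OF q(1)] by (simp add: pos_divide_le_eq)
      then show "s \<le> ereal M" using q Req by simp
    qed
  qed
qed

lemma is_min_Inf: "is_min (m::ereal) S \<Longrightarrow> Inf S = m"
  unfolding is_min_def by (meson Inf_greatest Inf_lower antisym)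

lemma is_max_Sup: "is_max (m::ereal) S \<Longrightarrow> Sup S = m"
  unfolding is_max_def by (meson Sup_least Sup_upper antisym)

lemma D_nonneg:
  fixes h :: "'y::finite \<Rightarrow> real"
  assumes "q \<in> prob_simplex" "\<And>y. h y \<ge> 0"
  shows "0 \<le> (\<Sum>y\<in>UNIV. q y * h y)"
  using assms unfolding prob_simplex_def by (auto intro!: sum_nonneg)

lemma C1:
  fixes g :: "'x::finite \<Rightarrow> 'y::finite \<Rightarrow> real" and h :: "'y \<Rightarrow> real"
  assumes g_pos: "\<And>x y. g x y > 0" and h_nonneg: "\<And>y. h y \<ge> 0" and q: "q \<in> prob_simplex"
  shows "\<exists>m. is_min m ((\<lambda>p. R g h p q) ` prob_simplex)"
proof (cases "(\<Sum>y\<in>UNIV. q y * h y) = 0")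
  case True
  have "R g h p q = \<infinity>" if p: "p \<in> prob_simplex" for p
  proof -
    have "0 < (\<Sum>x\<in>UNIV. p x * (\<Sum>y\<in>UNIV. q y * g x y))"
      using pos_comb[OF p] pos_comb[OF q] g_pos by auto
    then show ?thesis unfolding R_def R_num True by simp
  qed
  then have "is_min \<infinity> ((\<lambda>p. R g h p q) ` prob_simplex)"
    unfolding is_min_def using delta_in by (auto intro: image_eqI)
  then show ?thesis by blast
next
  case False
  moreover have "0 \<le> (\<Sum>y\<in>UNIV. q y * h y)" by (rule D_nonneg) (use q h_nonneg in auto)
  ultimately have "0 < (\<Sum>y\<in>UNIV. q y * h y)" by linarith
  then show ?thesis using R_min[where g=g and h=h, OF q] by blast
qed

theorem theorem9:
  fixes g :: "'x::finite \<Rightarrow> 'y::finite \<Rightarrow> real" and h :: "'y \<Rightarrow> real"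
  assumes g_pos: "\<And>x y. g x y > 0"
    and h_nonneg: "\<And>y. h y \<ge> 0"
  shows "(\<forall>q\<in>prob_simplex. \<exists>m. is_min m ((\<lambda>p. R g h p q) ` prob_simplex))
    \<and> (\<forall>p\<in>prob_simplex. \<exists>m. is_max m ((\<lambda>q. R g h p q) ` prob_simplex))
    \<and> (\<exists>v. is_max v ((\<lambda>q. Min (range (\<lambda>x. E1 g h q x))) ` prob_simplex)
          \<and> is_min v ((\<lambda>p. Max (range (\<lambda>y. E2 g h p y))) ` prob_simplex)
          \<and> is_max v ((\<lambda>q. INF p\<in>prob_simplex. R g h p q) ` prob_simplex)
          \<and> is_min v ((\<lambda>p. SUP q\<in>prob_simplex. R g h p q) ` prob_simplex))"
proof -
  have P1: "\<forall>q\<in>prob_simplex. \<exists>m. is_min m ((\<lambda>p. R g h p q) ` prob_simplex)"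
    using C1[where g=g and h=h, OF g_pos h_nonneg] by blast
  show ?thesis
  proof (cases "\<forall>y. h y > 0")
    case False
    then obtain y0 where "\<not> h y0 > 0" by blast
    then have hy0: "h y0 = 0" using h_nonneg[of y0] by simp
    define d :: "'y \<Rightarrow> real" where "d = (\<lambda>y. if y = y0 then 1 else 0)"
    have d_in: "d \<in> prob_simplex" unfolding d_def by (rule delta_in)
    have Rd: "R g h p d = \<infinity>" if p: "p \<in> prob_simplex" for p
    proof -
      have "0 < (\<Sum>x\<in>UNIV. p x * (\<Sum>y\<in>UNIV. d y * g x y))"
        using pos_comb[OF p] pos_comb[OF d_in] g_pos by auto
      moreover have "(\<Sum>y\<in>UNIV. d y * h y) = 0" unfolding d_def using hy0
        by (simp add: if_distrib[of "\<lambda>a. a * _"] cong: if_cong)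
      ultimately show ?thesis unfolding R_def R_num by simp
    qed
    have E2inf: "E2 g h p y0 = \<infinity>" if p: "p \<in> prob_simplex" for p
    proof -
      have "0 < (\<Sum>x\<in>UNIV. p x * g x y0)" using pos_comb[OF p] g_pos by auto
      then show ?thesis unfolding E2_def hy0 by simp
    qed
    have E1inf: "E1 g h d x = \<infinity>" for x
    proof -
      have "ereal (d y) * (ereal (g x y) / ereal (h y)) = (if y = y0 then \<infinity> else 0)" for y
        unfolding d_def using hy0 g_pos[of x y0] by auto
      then show ?thesis unfolding E1_def by simp
    qed
    have P2: "\<forall>p\<in>prob_simplex. \<exists>m. is_max m ((\<lambda>q. R g h p q) ` prob_simplex)"
    proof
      fix p :: "'x \<Rightarrow> real" assume p: "p \<in> prob_simplex"
      have "is_max \<infinity> ((\<lambda>q. R g h p q) ` prob_simplex)"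
        unfolding is_max_def using Rd[OF p] d_in by (auto intro: image_eqI[where x = d])
      then show "\<exists>m. is_max m ((\<lambda>q. R g h p q) ` prob_simplex)" by blast
    qed
    have i1: "is_max \<infinity> ((\<lambda>q. Min (range (\<lambda>x. E1 g h q x))) ` prob_simplex)"
      unfolding is_max_def using E1inf d_in by (auto intro!: image_eqI[where x = d])
    have maxE2: "Max (range (\<lambda>y. E2 g h p y)) = \<infinity>" if p: "p \<in> prob_simplex" for p
    proof -
      have "E2 g h p y0 \<le> Max (range (\<lambda>y. E2 g h p y))" by (rule Max_ge) auto
      then show ?thesis using E2inf[OF p] by simp
    qed
    have i2: "is_min \<infinity> ((\<lambda>p. Max (range (\<lambda>y. E2 g h p y))) ` prob_simplex)"
      unfolding is_min_def using maxE2 delta_in by auto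
    have infd: "(INF p\<in>prob_simplex. R g h p d) = \<infinity>"
      using Rd by (intro antisym INF_greatest) auto
    have i3: "is_max \<infinity> ((\<lambda>q. INF p\<in>prob_simplex. R g h p q) ` prob_simplex)"
      unfolding is_max_def using infd d_in by (auto intro!: image_eqI[where x = d])
    have supinf: "(SUP q\<in>prob_simplex. R g h p q) = \<infinity>" if p: "p \<in> prob_simplex" for p
    proof -
      have "R g h p d \<le> (SUP q\<in>prob_simplex. R g h p q)" using d_in by (rule SUP_upper)
      then show ?thesis using Rd[OF p] by simp
    qed
    have i4: "is_min \<infinity> ((\<lambda>p. SUP q\<in>prob_simplex. R g h p q) ` prob_simplex)"
      unfolding is_min_def using supinf delta_in by auto
    show ?thesis using P1 P2 i1 i2 i3 i4 by blast
  next
    case True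
    then have hpos: "\<And>y. h y > 0" by blast
    define A where "A x y = g x y / h y" for x y
    define fmin where "fmin q = Min (range (\<lambda>x. \<Sum>y\<in>UNIV. q y * A x y))" for q :: "'y \<Rightarrow> real"
    define fmax where "fmax p = Max (range (\<lambda>y. \<Sum>x\<in>UNIV. p x * A x y))" for p :: "'x \<Rightarrow> real"
    obtain ps qs where ps: "ps \<in> prob_simplex" and qs: "qs \<in> prob_simplex"
      and core: "\<forall>x y. (\<Sum>x'\<in>UNIV. ps x' * A x' y) \<le> (\<Sum>y'\<in>UNIV. qs y' * A x y')"
      using minimax_core[of A] by blast
    define v where "v = fmin qs"
    have "fmax ps \<le> fmin qs" unfolding fmax_def fmin_def using core
      by (simp add: Max_le_iff Min_ge_iff)
    moreover have "fmin qs \<le> fmax ps" unfolding fmax_def fmin_def by (rule weak_dual[OF ps qs])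
    ultimately have vps: "fmax ps = v" unfolding v_def by simp
    have vup: "fmin q \<le> v" if "q \<in> prob_simplex" for q
      unfolding vps[symmetric] fmax_def fmin_def by (rule weak_dual[OF ps that])
    have vlo: "v \<le> fmax p" if "p \<in> prob_simplex" for p
      unfolding v_def fmax_def fmin_def by (rule weak_dual[OF that qs])
    have E1eq: "E1 g h q x = ereal (\<Sum>y\<in>UNIV. q y * A x y)" for q x
      unfolding E1_def A_def using hpos by (simp add: less_imp_neq[symmetric])
    have E2eq: "E2 g h p y = ereal (\<Sum>x\<in>UNIV. p x * A x y)" for p y
      unfolding E2_def A_def using hpos[of y] by (simp add: sum_divide_distrib)
    have minE1: "Min (range (\<lambda>x. E1 g h q x)) = ereal (fmin q)" for q
    proof (rule Min_eqI)
      show "ereal (fmin q) \<in> range (\<lambda>x. E1 g h q x)"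
      proof -
        have "fmin q \<in> range (\<lambda>x. \<Sum>y\<in>UNIV. q y * A x y)" unfolding fmin_def by (rule Min_in) auto
        then show ?thesis unfolding E1eq by auto
      qed
    qed (auto simp: E1eq fmin_def)
    have maxE2: "Max (range (\<lambda>y. E2 g h p y)) = ereal (fmax p)" for p
    proof (rule Max_eqI)
      show "ereal (fmax p) \<in> range (\<lambda>y. E2 g h p y)"
      proof -
        have "fmax p \<in> range (\<lambda>y. \<Sum>x\<in>UNIV. p x * A x y)" unfolding fmax_def by (rule Max_in) auto
        then show ?thesis unfolding E2eq by auto
      qed
    qed (auto simp: E2eq fmax_def)
    have img1: "(\<lambda>q. Min (range (\<lambda>x. E1 g h q x))) ` prob_simplex = (\<lambda>q. ereal (fmin q)) ` prob_simplex"
      unfolding minE1 ..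
    have img2: "(\<lambda>p. Max (range (\<lambda>y. E2 g h p y))) ` prob_simplex = (\<lambda>p. ereal (fmax p)) ` prob_simplex"
      unfolding maxE2 ..
    have i1: "is_max (ereal v) ((\<lambda>q. ereal (fmin q)) ` prob_simplex)"
      unfolding is_max_def using vup qs v_def by auto
    have i2: "is_min (ereal v) ((\<lambda>p. ereal (fmax p)) ` prob_simplex)"
      unfolding is_min_def using vlo ps vps by auto
    have Dpos: "(\<Sum>y\<in>UNIV. q y * h y) > 0" if "q \<in> prob_simplex" for q
      using pos_comb[OF that, of h] hpos by simp
    define nq where "nq q y = q y * h y / (\<Sum>y\<in>UNIV. q y * h y)" for q :: "'y \<Rightarrow> real" and y
    have nq_in: "nq q \<in> prob_simplex" if q: "q \<in> prob_simplex" for q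
    proof -
      have "0 \<le> q y * h y / (\<Sum>y\<in>UNIV. q y * h y)" for y
        using q Dpos[OF q] hpos[of y] unfolding prob_simplex_def
        by (intro divide_nonneg_nonneg mult_nonneg_nonneg) (auto simp: less_imp_le)
      then show ?thesis using Dpos[OF q] unfolding prob_simplex_def nq_def
        by (simp add: sum_divide_distrib[symmetric])
    qed
    have infR: "(INF p\<in>prob_simplex. R g h p q) = ereal (fmin (nq q))" if q: "q \<in> prob_simplex" for q
    proof -
      have feq: "(\<lambda>x. (\<Sum>y\<in>UNIV. q y * g x y) / (\<Sum>y\<in>UNIV. q y * h y)) = (\<lambda>x. \<Sum>y\<in>UNIV. nq q y * A x y)"
      proof
        fix x
        have "(\<Sum>y\<in>UNIV. nq q y * A x y) = (\<Sum>y\<in>UNIV. q y * g x y / (\<Sum>y\<in>UNIV. q y * h y))"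
          unfolding nq_def A_def using hpos by (intro sum.cong) (auto simp: less_imp_neq[symmetric])
        then show "(\<Sum>y\<in>UNIV. q y * g x y) / (\<Sum>y\<in>UNIV. q y * h y) = (\<Sum>y\<in>UNIV. nq q y * A x y)"
          by (simp add: sum_divide_distrib)
      qed
      show ?thesis using is_min_Inf[OF R_min[where g=g and h=h, OF q Dpos[OF q]]] unfolding fmin_def feq .
    qed
    have img3: "(\<lambda>q. INF p\<in>prob_simplex. R g h p q) ` prob_simplex = (\<lambda>q. ereal (fmin q)) ` prob_simplex"
    proof
      show "(\<lambda>q. INF p\<in>prob_simplex. R g h p q) ` prob_simplex \<subseteq> (\<lambda>q. ereal (fmin q)) ` prob_simplex"
        using infR nq_in by auto
      show "(\<lambda>q. ereal (fmin q)) ` prob_simplex \<subseteq> (\<lambda>q. INF p\<in>prob_simplex. R g h p q) ` prob_simplex"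
      proof
        fix z assume "z \<in> (\<lambda>q. ereal (fmin q)) ` prob_simplex"
        then obtain q' where q': "q' \<in> prob_simplex" "z = ereal (fmin q')" by auto
        define S where "S = (\<Sum>y\<in>UNIV. q' y / h y)"
        have "S > 0" unfolding S_def using pos_comb[OF q'(1), of "\<lambda>y. 1 / h y"] hpos by simp
        define q where "q y = q' y / h y / S" for y
        have q_in: "q \<in> prob_simplex"
        proof -
          have "0 \<le> q y" for y
            using q'(1) \<open>S > 0\<close> hpos[of y] unfolding prob_simplex_def q_def
            by (intro divide_nonneg_nonneg) (auto simp: less_imp_le)
          moreover have "(\<Sum>y\<in>UNIV. q y) = (\<Sum>y\<in>UNIV. q' y / h y) / S"
            unfolding q_def by (simp only: sum_divide_distrib)
          then have "(\<Sum>y\<in>UNIV. q y) = 1" using \<open>S > 0\<close> unfolding S_def by simp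
          ultimately show ?thesis unfolding prob_simplex_def by simp
        qed
        have Dq: "(\<Sum>y\<in>UNIV. q y * h y) = 1 / S"
        proof -
          have "(\<Sum>y\<in>UNIV. q y * h y) = (\<Sum>y\<in>UNIV. q' y / S)"
            unfolding q_def using hpos by (intro sum.cong) (auto simp: less_imp_neq[symmetric])
          also have "\<dots> = 1 / S" using q'(1) unfolding prob_simplex_def by (simp add: sum_divide_distrib[symmetric])
          finally show ?thesis .
        qed
        have "nq q = q'"
        proof
          fix y show "nq q y = q' y"
            unfolding nq_def Dq unfolding q_def using hpos[of y] \<open>S > 0\<close> by (simp add: field_simps)
        qed
        then have "z = (INF p\<in>prob_simplex. R g h p q)" using infR[OF q_in] q'(2) by simp
        then show "z \<in> (\<lambda>q. INF p\<in>prob_simplex. R g h p q) ` prob_simplex" using q_in by blast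
      qed
    qed
    have supR: "(SUP q\<in>prob_simplex. R g h p q) = ereal (fmax p)" if p: "p \<in> prob_simplex" for p
    proof -
      have feq: "(\<lambda>y. (\<Sum>x\<in>UNIV. p x * g x y) / h y) = (\<lambda>y. \<Sum>x\<in>UNIV. p x * A x y)"
        unfolding A_def by (simp add: sum_divide_distrib)
      show ?thesis using is_max_Sup[OF R_max_B[where g=g and h=h, OF hpos p]] unfolding fmax_def feq .
    qed
    have img4: "(\<lambda>p. SUP q\<in>prob_simplex. R g h p q) ` prob_simplex = (\<lambda>p. ereal (fmax p)) ` prob_simplex"
      using supR by (auto intro!: image_cong)
    have P2: "\<forall>p\<in>prob_simplex. \<exists>m. is_max m ((\<lambda>q. R g h p q) ` prob_simplex)"
      using R_max_B[where g=g and h=h, OF hpos] by blast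
    show ?thesis using P1 P2 i1 i2 img1 img2 img3 img4 by metis
  qed
qed

end
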